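(* Let $G$ be a graph on $n$ vertices that has at least two independent (vertex-disjoint) edges. Then $D_{n-1}(G)$ is connected.
   Context: All graphs are finite and simple. A set $S \subseteq V(G)$ is a dominating set of $G$ if every vertex of $V(G)\setminus S$ is adjacent to a vertex of $S$. $\gamma(G)$ is the minimum cardinality of a dominating set of $G$. For an integer $k \ge \gamma(G)$, the $k$-dominating graph $D_k(G)$ is the graph whose vertices are the dominating sets of $G$ of cardinality at most $k$, with two such sets $A,B$ adjacent if and only if their symmetric difference $(A\setminus B)\cup(B\setminus A)$ consists of exactly one vertex of $G$. *)

theory Defs
  imports Main
begin

definition simple_graph :: "'a set \<Rightarrow> ('a \<Rightarrow> 'a \<Rightarrow> bool) \<Rightarrow> bool" where
  "simple_graph V E \<longleftrightarrow> finite V \<and> (\<forall>u v. E u v \<longrightarrow> u \<in> V \<and> v \<in> V)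
     \<and> (\<forall>u v. E u v \<longrightarrow> E v u) \<and> (\<forall>v. \<not> E v v)"

definition dominating_set :: "'a set \<Rightarrow> ('a \<Rightarrow> 'a \<Rightarrow> bool) \<Rightarrow> 'a set \<Rightarrow> bool" where
  "dominating_set V E S \<longleftrightarrow> S \<subseteq> V \<and> (\<forall>v \<in> V - S. \<exists>s \<in> S. E v s)"

definition dom_graph_vertices :: "'a set \<Rightarrow> ('a \<Rightarrow> 'a \<Rightarrow> bool) \<Rightarrow> nat \<Rightarrow> 'a set set" where
  "dom_graph_vertices V E k = {S. dominating_set V E S \<and> card S \<le> k}"

definition dom_graph_adj :: "'a set \<Rightarrow> ('a \<Rightarrow> 'a \<Rightarrow> bool) \<Rightarrow> nat \<Rightarrow> 'a set \<Rightarrow> 'a set \<Rightarrow> bool" where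
  "dom_graph_adj V E k A B \<longleftrightarrow> A \<in> dom_graph_vertices V E k \<and> B \<in> dom_graph_vertices V E k
     \<and> (\<exists>x. (A - B) \<union> (B - A) = {x})"

definition connected_graph :: "'b set \<Rightarrow> ('b \<Rightarrow> 'b \<Rightarrow> bool) \<Rightarrow> bool" where
  "connected_graph W R \<longleftrightarrow> W \<noteq> {} \<and> (\<forall>x \<in> W. \<forall>y \<in> W. R\<^sup>*\<^sup>* x y)"

end

theory Submission
  imports Defs
begin

lemma rt_sym:
  assumes "\<And>x y. R x y \<Longrightarrow> R y x" and "R\<^sup>*\<^sup>* x y"
  shows "R\<^sup>*\<^sup>* y x"
  using assms(2)
proof (induction rule: rtranclp_induct)
  case base then show ?case by simp
next
  case (step y z)
  then show ?case using assms(1) by (meson converse_rtranclp_into_rtranclp)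
qed

lemma adj_sym: "dom_graph_adj V E k A B \<Longrightarrow> dom_graph_adj V E k B A"
  unfolding dom_graph_adj_def by (auto simp: Un_commute)

lemma two_step:
  assumes g: "simple_graph V E" and cV: "card V = n"
    and xy: "x \<noteq> y" "x \<in> V" "y \<in> V"
    and w: "E x w" "w \<noteq> y" and u: "E y u" "u \<noteq> x"
  shows "(dom_graph_adj V E (n - 1))\<^sup>*\<^sup>* (V - {x}) (V - {y})"
proof -
  have fin: "finite V" using g by (simp add: simple_graph_def)
  have wV: "w \<in> V" "u \<in> V" using g w u by (auto simp: simple_graph_def)
  have wx: "w \<noteq> x" "u \<noteq> y" using g w u by (auto simp: simple_graph_def)
  have d1: "dominating_set V E (V - {x})" using w wV wx unfolding dominating_set_def by auto
  have d2: "dominating_set V E (V - {y})" using u wV wx unfolding dominating_set_def by auto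
  have d3: "dominating_set V E (V - {x, y})" using u w wV wx unfolding dominating_set_def by auto
  have c1: "card (V - {x}) \<le> n - 1" using fin xy cV by simp
  have c2: "card (V - {y}) \<le> n - 1" using fin xy cV by simp
  have c3: "card (V - {x, y}) \<le> n - 1"
  proof -
    have "card (V - {x, y}) \<le> card (V - {x})" by (rule card_mono) (use fin in auto)
    then show ?thesis using c1 by linarith
  qed
  have m1: "V - {x} \<in> dom_graph_vertices V E (n - 1)" using d1 c1 by (simp add: dom_graph_vertices_def)
  have m2: "V - {y} \<in> dom_graph_vertices V E (n - 1)" using d2 c2 by (simp add: dom_graph_vertices_def)
  have m3: "V - {x, y} \<in> dom_graph_vertices V E (n - 1)" using d3 c3 by (simp add: dom_graph_vertices_def)
  have "dom_graph_adj V E (n - 1) (V - {x}) (V - {x, y})"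
    unfolding dom_graph_adj_def using m1 m3 xy by (intro conjI exI[of _ y]) auto
  moreover have "dom_graph_adj V E (n - 1) (V - {x, y}) (V - {y})"
    unfolding dom_graph_adj_def using m2 m3 xy by (intro conjI exI[of _ x]) auto
  ultimately show ?thesis by (meson rtranclp.rtrancl_into_rtrancl rtranclp.rtrancl_refl)
qed

lemma up:
  assumes g: "simple_graph V E" and cV: "card V = n" and ne: "V \<noteq> {}"
  shows "S \<in> dom_graph_vertices V E (n - 1) \<Longrightarrow>
    \<exists>x w. x \<in> V \<and> E x w \<and> (dom_graph_adj V E (n - 1))\<^sup>*\<^sup>* S (V - {x})"
proof (induction "n - 1 - card S" arbitrary: S rule: less_induct)
  case less
  have fin: "finite V" using g by (simp add: simple_graph_def)
  have dS: "dominating_set V E S" and cS: "card S \<le> n - 1"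
    using less.prems by (auto simp: dom_graph_vertices_def)
  have SV: "S \<subseteq> V" using dS by (simp add: dominating_set_def)
  have "S \<noteq> V"
  proof
    assume "S = V"
    hence "card V \<le> card V - 1" using cS cV by simp
    moreover have "card V > 0" using ne fin card_gt_0_iff by blast
    ultimately show False by linarith
  qed
  then obtain v where v: "v \<in> V" "v \<notin> S" using SV by blast
  show ?case
  proof (cases "card S = n - 1")
    case True
    have "card (V - S) = 1"
    proof -
      have "card (V - S) = card V - card S" using card_Diff_subset[OF finite_subset[OF SV fin] SV] .
      moreover have "card V > 0" using fin v card_gt_0_iff by blast
      ultimately show ?thesis using True cV by simp
    qed
    then obtain x where x: "V - S = {x}" by (auto simp: card_Suc_eq)
    hence "S = V - {x}" using SV by blast
    moreover have "x \<in> V" "x \<notin> S" using x by auto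
    moreover then obtain s where "E x s" using dS by (auto simp: dominating_set_def)
    ultimately show ?thesis by blast
  next
    case False
    hence lt: "card S < n - 1" using cS by simp
    have finS: "finite S" using finite_subset[OF SV fin] .
    have dS': "dominating_set V E (insert v S)" using dS v unfolding dominating_set_def by auto
    have cS': "card (insert v S) = card S + 1" using finS v by simp
    have mem: "insert v S \<in> dom_graph_vertices V E (n - 1)"
      using dS' cS' lt by (simp add: dom_graph_vertices_def)
    have "n - 1 - card (insert v S) < n - 1 - card S" using cS' lt by simp
    from less.hyps[OF this mem] obtain x w where
      xw: "x \<in> V" "E x w" "(dom_graph_adj V E (n - 1))\<^sup>*\<^sup>* (insert v S) (V - {x})" by blast
    have "dom_graph_adj V E (n - 1) S (insert v S)"
      unfolding dom_graph_adj_def using less.prems mem v by (intro conjI exI[of _ v]) auto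
    with xw show ?thesis by (meson converse_rtranclp_into_rtranclp)
  qed
qed

theorem lemma2:
  fixes V :: "'a set" and E :: "'a \<Rightarrow> 'a \<Rightarrow> bool" and n :: nat
  assumes "simple_graph V E"
    and "card V = n"
    and "\<exists>a b c d. E a b \<and> E c d \<and> {a, b} \<inter> {c, d} = {}"
  shows "connected_graph (dom_graph_vertices V E (n - 1)) (dom_graph_adj V E (n - 1))"
proof -
  let ?R = "dom_graph_adj V E (n - 1)"
  obtain a b c d where ab: "E a b" and cd: "E c d" and disj: "{a, b} \<inter> {c, d} = {}"
    using assms(3) by blast
  have g: "simple_graph V E" by fact
  have fin: "finite V" using g by (simp add: simple_graph_def)
  have inV: "a \<in> V" "b \<in> V" "c \<in> V" "d \<in> V" using g ab cd by (auto simp: simple_graph_def)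
  have irr: "a \<noteq> b" "c \<noteq> d" using g ab cd by (auto simp: simple_graph_def)
  have sy: "\<And>u v. E u v \<Longrightarrow> E v u" using g by (auto simp: simple_graph_def)
  have dist: "a \<noteq> c" "a \<noteq> d" "b \<noteq> c" "b \<noteq> d" using disj by auto
  have ca: "?R\<^sup>*\<^sup>* (V - {c}) (V - {a})"
    by (rule two_step[OF g assms(2), of c a d b]) (use inV cd ab dist in auto)
  have da: "?R\<^sup>*\<^sup>* (V - {d}) (V - {a})"
    by (rule two_step[OF g assms(2), of d a c b]) (use inV cd ab dist sy in auto)
  have toa: "?R\<^sup>*\<^sup>* (V - {x}) (V - {a})" if x: "x \<in> V" "E x w" for x w
  proof -
    consider "x = c" | "x = d" | "x \<noteq> c" "x \<noteq> d" "w \<noteq> c" | "x \<noteq> c" "x \<noteq> d" "w = c" by blast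
    then show ?thesis
    proof cases
      case 1 then show ?thesis using ca by simp
    next
      case 2 then show ?thesis using da by simp
    next
      case 3
      have "?R\<^sup>*\<^sup>* (V - {x}) (V - {c})"
        by (rule two_step[OF g assms(2), of x c w d]) (use 3 x inV cd in auto)
      then show ?thesis using ca by (meson rtranclp_trans)
    next
      case 4
      have "?R\<^sup>*\<^sup>* (V - {x}) (V - {d})"
        by (rule two_step[OF g assms(2), of x d w c]) (use 4 x inV cd irr sy in auto)
      then show ?thesis using da by (meson rtranclp_trans)
    qed
  qed
  have Rs: "\<And>A B. ?R A B \<Longrightarrow> ?R B A" by (rule adj_sym)
  have main: "?R\<^sup>*\<^sup>* S (V - {a})" if Smem: "S \<in> dom_graph_vertices V E (n - 1)" for S
  proof -
    have "V \<noteq> {}" using inV by blast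
    then obtain x w where "x \<in> V" "E x w" "?R\<^sup>*\<^sup>* S (V - {x})" using up[OF g assms(2) \<open>V \<noteq> {}\<close> Smem] by blast
    then show ?thesis using toa by (meson rtranclp_trans)
  qed
  have "V - {a} \<in> dom_graph_vertices V E (n - 1)"
    using ab inV irr fin assms(2)
    unfolding dom_graph_vertices_def dominating_set_def by auto
  moreover have "\<forall>x \<in> dom_graph_vertices V E (n - 1). \<forall>y \<in> dom_graph_vertices V E (n - 1). ?R\<^sup>*\<^sup>* x y"
  proof (intro ballI)
    fix x y assume "x \<in> dom_graph_vertices V E (n - 1)" "y \<in> dom_graph_vertices V E (n - 1)"
    then have "?R\<^sup>*\<^sup>* x (V - {a})" "?R\<^sup>*\<^sup>* y (V - {a})" using main by auto
    moreover have "?R\<^sup>*\<^sup>* (V - {a}) y" using rt_sym[of ?R, OF Rs calculation(2)] by simp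
    ultimately show "?R\<^sup>*\<^sup>* x y" by (meson rtranclp_trans)
  qed
  ultimately show ?thesis unfolding connected_graph_def by blast
qed

end
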